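(* There exist commutative rings $R_1$ and $R_2$ with $R_1 = 0$ (the zero ring) such that $R = R_1 \times R_2$ is a commutative weakly tripotent ring, but $R_2$ is not a tripotent ring of characteristic three.
   Context: All rings are associative with identity $1$. An element $a$ of a ring $R$ is tripotent if $a^3 = a$; a ring is tripotent if every element is tripotent. An element $a$ of $R$ is weakly tripotent if $a^3 = a$ or $(1+a)^3 = 1+a$; a ring $R$ is weakly tripotent if every element of $R$ is weakly tripotent. *)

theory Defs
  imports "HOL-Algebra.Algebra"
begin

definition tripotent_elem :: "('a, 'b) ring_scheme \<Rightarrow> 'a \<Rightarrow> bool" where
  "tripotent_elem R a \<longleftrightarrow> a [^]\<^bsub>R\<^esub> (3::nat) = a"

definition tripotent_ring :: "('a, 'b) ring_scheme \<Rightarrow> bool" where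
  "tripotent_ring R \<longleftrightarrow> ring R \<and> (\<forall>a \<in> carrier R. tripotent_elem R a)"

definition weakly_tripotent_elem :: "('a, 'b) ring_scheme \<Rightarrow> 'a \<Rightarrow> bool" where
  "weakly_tripotent_elem R a \<longleftrightarrow>
     tripotent_elem R a \<or> tripotent_elem R (\<one>\<^bsub>R\<^esub> \<oplus>\<^bsub>R\<^esub> a)"

definition weakly_tripotent_ring :: "('a, 'b) ring_scheme \<Rightarrow> bool" where
  "weakly_tripotent_ring R \<longleftrightarrow> ring R \<and> (\<forall>a \<in> carrier R. weakly_tripotent_elem R a)"

definition ring_char :: "('a, 'b) ring_scheme \<Rightarrow> nat" where
  "ring_char R = (if \<exists>n::nat. n > 0 \<and> add_pow R n \<one>\<^bsub>R\<^esub> = \<zero>\<^bsub>R\<^esub>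
                  then (LEAST n::nat. n > 0 \<and> add_pow R n \<one>\<^bsub>R\<^esub> = \<zero>\<^bsub>R\<^esub>)
                  else 0)"

end

theory Submission
  imports Defs "HOL-Number_Theory.Residues"
begin

definition Z1 :: "int ring" where
  "Z1 = \<lparr>carrier = {0}, monoid.mult = \<lambda>x y. 0, one = 0, ring.zero = 0, ring.add = \<lambda>x y. 0\<rparr>"

lemma Z1_cring: "cring Z1"
  unfolding Z1_def
  by (rule cringI; (rule abelian_groupI | rule comm_monoidI)?; auto)

lemma R2_cring: "cring (residue_ring 2)"
proof -
  interpret residues 2 "residue_ring 2" by unfold_locales auto
  show ?thesis by (rule cring_axioms)
qed

lemma prod_mult: "x \<otimes>\<^bsub>RDirProd R S\<^esub> y = (fst x \<otimes>\<^bsub>R\<^esub> fst y, snd x \<otimes>\<^bsub>S\<^esub> snd y)"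
  by (auto simp: RDirProd_def DirProd_def monoid.defs case_prod_beta)

lemma prod_cring: "cring R \<Longrightarrow> cring S \<Longrightarrow> cring (RDirProd R S)"
  apply (rule cring.intro)
   apply (rule RDirProd_ring; simp add: cring.axioms(1))
  apply (rule comm_monoid.intro)
   apply (rule ring.axioms(2), rule RDirProd_ring; simp add: cring.axioms(1))
  apply (rule comm_monoid_axioms.intro)
  apply (auto simp: prod_mult RDirProd_carrier intro: comm_monoid.m_comm cring.axioms(2))
  done

theorem proposition2p1:
  shows "\<exists>(R1 :: int ring) (R2 :: int ring).
           cring R1 \<and> cring R2 \<and> carrier R1 = {\<zero>\<^bsub>R1\<^esub>} \<and>
           cring (RDirProd R1 R2) \<and> weakly_tripotent_ring (RDirProd R1 R2) \<and>
           \<not> (tripotent_ring R2 \<and> ring_char R2 = 3)"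
proof (intro exI conjI)
  let ?P = "RDirProd Z1 (residue_ring 2)"
  show c1: "cring Z1" by (rule Z1_cring)
  show c2: "cring (residue_ring 2)" by (rule R2_cring)
  show "carrier Z1 = {\<zero>\<^bsub>Z1\<^esub>}" by (simp add: Z1_def)
  show cp: "cring ?P" using c1 c2 by (rule prod_cring)
  then interpret P: cring ?P .
  have idem: "x \<otimes>\<^bsub>?P\<^esub> x = x" if "x \<in> carrier ?P" for x
  proof -
    have "x \<in> {0} \<times> {0..1::int}" using that by (simp add: RDirProd_carrier Z1_def residue_ring_def)
    then obtain y where "x = (0, y)" "y \<in> {0..1::int}" by auto
    then have "x = (0, y)" "y = 0 \<or> y = 1" by auto
    thus ?thesis by (auto simp: prod_mult Z1_def residue_ring_def)
  qed
  show "weakly_tripotent_ring ?P"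
    unfolding weakly_tripotent_ring_def weakly_tripotent_elem_def tripotent_elem_def
  proof (intro conjI ballI disjI1)
    show "ring ?P" by (rule P.ring_axioms)
    fix x assume x: "x \<in> carrier ?P"
    have "x [^]\<^bsub>?P\<^esub> (3::nat) = \<one>\<^bsub>?P\<^esub> \<otimes>\<^bsub>?P\<^esub> x \<otimes>\<^bsub>?P\<^esub> x \<otimes>\<^bsub>?P\<^esub> x"
      by (simp add: numeral_eq_Suc)
    also have "\<dots> = x" using x idem by simp
    finally show "x [^]\<^bsub>?P\<^esub> (3::nat) = x" .
  qed
  have "add_pow (residue_ring 2) (2::nat) \<one>\<^bsub>residue_ring 2\<^esub> = \<zero>\<^bsub>residue_ring 2\<^esub>"
    by (simp add: numeral_eq_Suc residue_ring_def add_pow_def)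
  hence "ring_char (residue_ring 2) \<le> 2"
    unfolding ring_char_def by (auto intro!: Least_le)
  thus "\<not> (tripotent_ring (residue_ring 2) \<and> ring_char (residue_ring 2) = 3)" by auto
qed

end
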